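(* Let $A\in\mathbb{R}^{n\times n}$, ${\mathbf w}\in\mathbb{R}^n$, $T>0$, and let $D$ be a linear differential operator in the time variable $t$ (for instance $\frac{\mathrm d}{\mathrm dt}$ or $\frac{\mathrm d^2}{\mathrm dt^2}$), acting componentwise on vector-valued functions. Let $\mathcal{V}_1\subseteq\mathcal{V}_2\subseteq\dots\subseteq\mathcal{V}_m\subseteq\mathcal{V}_{m+1}\subseteq\mathbb{R}^n$ be nested subspaces with $d_i=\dim(\mathcal{V}_i)$ (and $d_0=0$), such that ${\mathbf w}\in\mathcal{V}_1$ and $A\mathcal{V}_i\subseteq\mathcal{V}_{i+1}$ for all $i=1,\dots,m$. Let $\langle\cdot,\cdot\rangle_\ast$ be an inner product on $\mathcal{V}_{m+1}$, and let $U_{m+1}=[\mathcal{U}_1,\dots,\mathcal{U}_{m+1}]$, with $\mathcal{U}_j\in\mathbb{R}^{n\times b_j}$, $b_j=d_j-d_{j-1}$, be a nested basis of $\mathcal{V}_{m+1}$ that is orthonormal with respect to $\langle\cdot,\cdot\rangle_\ast$, i.e. $U_i=[\mathcal{U}_1,\dots,\mathcal{U}_i]$ has columns forming a $\langle\cdot,\cdot\rangle_\ast$-orthonormal basis of $\mathcal{V}_i$ for each $i\le m+1$. Let ${\mathbf y}_m:[0,T]\to\mathcal{V}_m$ be a (sufficiently differentiable) function whose residual \[ {\mathbf r}_m(t) := -D{\mathbf y}_m(t) - A{\mathbf y}_m(t) + {\mathbf w} \] satisfies the Galerkin condition $\langle {\mathbf v},{\mathbf r}_m(t)\rangle_\ast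 = 0$ for all ${\mathbf v}\in\mathcal{V}_m$ and all $t\in[0,T]$. Write ${\mathbf y}_m(t)=U_m{\mathbf x}_m(t)$ with ${\mathbf x}_m:[0,T]\to\mathbb{R}^{d_m}$. Then for all $t\in[0,T]$, \[ {\mathbf r}_m(t) = \mathcal{U}_{m+1}\boldsymbol{\beta}_m(t)\quad\text{with}\quad \boldsymbol{\beta}_m(t) = -\,\mathcal{U}_{m+1}^\ast A\,\mathcal{U}_m\,[{\mathbf x}_m(t)]_{d_{m-1}+1:d_m}. \]
   Context: For a matrix $W=[{\mathbf w}_1,\dots,{\mathbf w}_k]$ whose columns lie in $\mathcal{V}_{m+1}$, the adjoint $W^\ast$ with respect to $\langle\cdot,\cdot\rangle_\ast$ is the map sending ${\mathbf x}\in\mathcal{V}_{m+1}$ to the vector $(\langle{\mathbf w}_1,{\mathbf x}\rangle_\ast,\dots,\langle{\mathbf w}_k,{\mathbf x}\rangle_\ast)^{\top}\in\mathbb{R}^k$; thus $\mathcal{U}_{m+1}^\ast A\,\mathcal{U}_m$ is the $b_{m+1}\times b_m$ matrix with entries $\langle {\mathbf u}, A{\mathbf u}'\rangle_\ast$ for columns ${\mathbf u}$ of $\mathcal{U}_{m+1}$ and ${\mathbf u}'$ of $\mathcal{U}_m$ (well defined since $A\mathcal{V}_m\subseteq\mathcal{V}_{m+1}$). For a vector ${\mathbf v}$, $[{\mathbf v}]_{i:j}$ denotes the subvector of entries $i,i+1,\dots,j$. *)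

theory Defs
  imports "HOL-Analysis.Analysis"
begin

definition inner_product_on :: "('a::real_vector) set \<Rightarrow> ('a \<Rightarrow> 'a \<Rightarrow> real) \<Rightarrow> bool" where
  "inner_product_on V ip \<longleftrightarrow>
     (\<forall>x\<in>V. \<forall>y\<in>V. ip x y = ip y x) \<and>
     (\<forall>x\<in>V. \<forall>y\<in>V. \<forall>z\<in>V. ip (x + y) z = ip x z + ip y z) \<and>
     (\<forall>x\<in>V. \<forall>y\<in>V. \<forall>c. ip (c *\<^sub>R x) y = c * ip x y) \<and>
     (\<forall>x\<in>V. 0 \<le> ip x x) \<and>
     (\<forall>x\<in>V. ip x x = 0 \<longleftrightarrow> x = 0)"

definition lin_time_op :: "real \<Rightarrow> (real \<Rightarrow> real) set \<Rightarrow> ((real \<Rightarrow> real) \<Rightarrow> (real \<Rightarrow> real)) \<Rightarrow> bool" where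
  "lin_time_op T S Dop \<longleftrightarrow>
     (\<lambda>t. 0) \<in> S \<and>
     (\<forall>f\<in>S. \<forall>g\<in>S. (\<lambda>t. f t + g t) \<in> S) \<and>
     (\<forall>f\<in>S. \<forall>c. (\<lambda>t. c * f t) \<in> S) \<and>
     (\<forall>f\<in>S. \<forall>g\<in>S. \<forall>t\<in>{0..T}. Dop (\<lambda>s. f s + g s) t = Dop f t + Dop g t) \<and>
     (\<forall>f\<in>S. \<forall>c. \<forall>t\<in>{0..T}. Dop (\<lambda>s. c * f s) t = c * Dop f t) \<and>
     (\<forall>f g. (\<forall>s\<in>{0..T}. f s = g s) \<longrightarrow> (\<forall>t\<in>{0..T}. Dop f t = Dop g t))"

definition compD :: "((real \<Rightarrow> real) \<Rightarrow> (real \<Rightarrow> real)) \<Rightarrow> (real \<Rightarrow> real^'n) \<Rightarrow> real \<Rightarrow> real^'n" where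
  "compD Dop y t = (\<chi> i. Dop (\<lambda>s. y s $ i) t)"

end

theory Submission
  imports Defs
begin


lemma ipo_parts:
  assumes "inner_product_on V ip"
  shows "\<forall>x\<in>V. \<forall>y\<in>V. ip x y = ip y x"
    and "\<forall>x\<in>V. \<forall>y\<in>V. \<forall>z\<in>V. ip (x + y) z = ip x z + ip y z"
    and "\<forall>x\<in>V. \<forall>y\<in>V. \<forall>c. ip (c *\<^sub>R x) y = c * ip x y"
  using assms unfolding inner_product_on_def apply - apply (elim conjE, assumption)+ done

lemma lto_parts:
  assumes "lin_time_op T S Dop"
  shows "(\<lambda>t. 0) \<in> S"
    and "\<forall>f\<in>S. \<forall>g\<in>S. (\<lambda>t. f t + g t) \<in> S"
    and "\<forall>f\<in>S. \<forall>c. (\<lambda>t. c * f t) \<in> S"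
    and "\<forall>f\<in>S. \<forall>g\<in>S. \<forall>t\<in>{0..T}. Dop (\<lambda>s. f s + g s) t = Dop f t + Dop g t"
    and "\<forall>f\<in>S. \<forall>c. \<forall>t\<in>{0..T}. Dop (\<lambda>s. c * f s) t = c * Dop f t"
    and "\<forall>f g. (\<forall>s\<in>{0..T}. f s = g s) \<longrightarrow> (\<forall>t\<in>{0..T}. Dop f t = Dop g t)"
  using assms unfolding lin_time_op_def apply - apply (elim conjE, assumption)+ done

lemma ip_sym: "inner_product_on V ip \<Longrightarrow> x \<in> V \<Longrightarrow> y \<in> V \<Longrightarrow> ip x y = ip y x"
  using ipo_parts(1) by blast

lemma ip_right_add: "inner_product_on V ip \<Longrightarrow> subspace V \<Longrightarrow> a \<in> V \<Longrightarrow> x \<in> V \<Longrightarrow> y \<in> V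
   \<Longrightarrow> ip a (x + y) = ip a x + ip a y"
proof -
  assume h: "inner_product_on V ip" "subspace V" "a \<in> V" "x \<in> V" "y \<in> V"
  have "ip a (x + y) = ip (x + y) a" using h by (metis ip_sym subspace_add)
  also have "\<dots> = ip x a + ip y a" using h(1,4,5) ipo_parts(2)[OF h(1)] h(3) by blast
  also have "\<dots> = ip a x + ip a y" using h by (metis ip_sym)
  finally show ?thesis .
qed

lemma ip_right_scale: "inner_product_on V ip \<Longrightarrow> subspace V \<Longrightarrow> a \<in> V \<Longrightarrow> x \<in> V
   \<Longrightarrow> ip a (c *\<^sub>R x) = c * ip a x"
proof -
  assume h: "inner_product_on V ip" "subspace V" "a \<in> V" "x \<in> V"
  have "ip a (c *\<^sub>R x) = ip (c *\<^sub>R x) a" using h by (metis ip_sym subspace_mul)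
  also have "\<dots> = c * ip x a" using ipo_parts(3)[OF h(1)] h(3,4) by blast
  also have "\<dots> = c * ip a x" using h by (metis ip_sym)
  finally show ?thesis .
qed

lemma ip_right_zero: "inner_product_on V ip \<Longrightarrow> subspace V \<Longrightarrow> a \<in> V \<Longrightarrow> ip a 0 = 0"
  using ip_right_scale[of V ip a a 0] by simp

lemma ip_right_neg: "inner_product_on V ip \<Longrightarrow> subspace V \<Longrightarrow> a \<in> V \<Longrightarrow> x \<in> V
   \<Longrightarrow> ip a (- x) = - ip a x"
  using ip_right_scale[of V ip a x "-1"] by simp

lemma ip_sum_right:
  assumes "inner_product_on V ip" "subspace V" "a \<in> V" "finite K" "\<forall>k\<in>K. f k \<in> V"
  shows "ip a (\<Sum>k\<in>K. c k *\<^sub>R f k) = (\<Sum>k\<in>K. c k * ip a (f k))"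
  using assms(4,5)
proof (induction K rule: finite_induct)
  case empty then show ?case using ip_right_zero assms by simp
next
  case (insert k K)
  have s: "(\<Sum>k\<in>K. c k *\<^sub>R f k) \<in> V"
    using insert assms(2) by (auto intro!: subspace_sum subspace_mul)
  have "ip a (\<Sum>k\<in>insert k K. c k *\<^sub>R f k) = ip a (c k *\<^sub>R f k + (\<Sum>k\<in>K. c k *\<^sub>R f k))"
    using insert by simp
  also have "\<dots> = ip a (c k *\<^sub>R f k) + ip a (\<Sum>k\<in>K. c k *\<^sub>R f k)"
    using insert s assms by (intro ip_right_add) (auto intro: subspace_mul)
  also have "\<dots> = c k * ip a (f k) + (\<Sum>k\<in>K. c k * ip a (f k))"
    using insert assms ip_right_scale by auto
  finally show ?case using insert by simp
qed

lemma ortho_expand: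
  assumes ipo: "inner_product_on V ip" and sV: "subspace V" and fI: "finite I"
    and uV: "\<forall>k\<in>I. u k \<in> V"
    and orth: "\<forall>j\<in>I. \<forall>k\<in>I. ip (u j) (u k) = (if j = k then 1 else 0)"
    and r: "r \<in> span (u ` I)"
  shows "r = (\<Sum>k\<in>I. ip (u k) r *\<^sub>R u k)"
proof -
  have inj: "inj_on u I"
    unfolding inj_on_def using orth by (metis one_neq_zero)
  from r obtain c where "r = (\<Sum>v\<in>u ` I. c v *\<^sub>R v)"
    using span_finite[of "u ` I"] fI by auto
  then have rc: "r = (\<Sum>k\<in>I. c (u k) *\<^sub>R u k)"
    by (simp add: sum.reindex[OF inj])
  have "ip (u j) r = c (u j)" if j: "j \<in> I" for j
  proof -
    have "ip (u j) r = (\<Sum>k\<in>I. c (u k) * ip (u j) (u k))"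
      unfolding rc using ipo sV uV j fI by (intro ip_sum_right) auto
    also have "\<dots> = (\<Sum>k\<in>I. if k = j then c (u k) else 0)"
      using orth j by (intro sum.cong) auto
    also have "\<dots> = c (u j)" using j fI by simp
    finally show ?thesis .
  qed
  then show ?thesis using rc by (metis (no_types, lifting) sum.cong)
qed

lemma Dop_sum:
  assumes D: "lin_time_op T S Dop" and fK: "finite K" and fS: "\<forall>j\<in>K. f j \<in> S"
  shows "(\<lambda>s. \<Sum>j\<in>K. c j * f j s) \<in> S \<and> (\<forall>t\<in>{0..T}. Dop (\<lambda>s. \<Sum>j\<in>K. c j * f j s) t = (\<Sum>j\<in>K. c j * Dop (f j) t))"
  using fK fS
proof (induction K rule: finite_induct)
  case empty
  have z: "(\<lambda>t. 0::real) \<in> S" by (rule lto_parts(1)[OF D])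
  have "Dop (\<lambda>s. 0 * (0::real)) t = 0 * Dop (\<lambda>t. 0) t" if "t \<in> {0..T}" for t
    using lto_parts(5)[OF D, rule_format, OF z that, of 0] .
  then have "\<forall>t\<in>{0..T}. Dop (\<lambda>s. 0) t = 0" by simp
  then show ?case using z by simp
next
  case (insert k K)
  have ck: "(\<lambda>s. c k * f k s) \<in> S" using lto_parts(3)[OF D, rule_format, of "f k" "c k"] insert by simp
  have IH: "(\<lambda>s. \<Sum>j\<in>K. c j * f j s) \<in> S" using insert by blast
  have eq: "(\<lambda>s. \<Sum>j\<in>insert k K. c j * f j s) = (\<lambda>s. c k * f k s + (\<Sum>j\<in>K. c j * f j s))"
    using insert by simp
  show ?case unfolding eq
  proof
    show "(\<lambda>s. c k * f k s + (\<Sum>j\<in>K. c j * f j s)) \<in> S"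
      using lto_parts(2)[OF D, rule_format, OF ck IH] .
    show "\<forall>t\<in>{0..T}. Dop (\<lambda>s. c k * f k s + (\<Sum>j\<in>K. c j * f j s)) t = (\<Sum>j\<in>insert k K. c j * Dop (f j) t)"
    proof
      fix t assume t: "t \<in> {0..T}"
      have "Dop (\<lambda>s. c k * f k s + (\<Sum>j\<in>K. c j * f j s)) t = Dop (\<lambda>s. c k * f k s) t + Dop (\<lambda>s. \<Sum>j\<in>K. c j * f j s) t"
        using lto_parts(4)[OF D, rule_format, OF ck IH t] .
      also have "Dop (\<lambda>s. c k * f k s) t = c k * Dop (f k) t"
        using lto_parts(5)[OF D, rule_format, of "f k" t "c k"] insert t by simp
      also have "Dop (\<lambda>s. \<Sum>j\<in>K. c j * f j s) t = (\<Sum>j\<in>K. c j * Dop (f j) t)"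
        using insert t by blast
      finally show "Dop (\<lambda>s. c k * f k s + (\<Sum>j\<in>K. c j * f j s)) t = (\<Sum>j\<in>insert k K. c j * Dop (f j) t)"
        using insert by simp
    qed
  qed
qed


lemma mv_sum: "A *v (\<Sum>j\<in>K. c j *\<^sub>R v j) = (\<Sum>j\<in>K. c j *\<^sub>R (A *v v j))"
  for A :: "real^'n^'n"
  by (induction K rule: infinite_finite_induct)
     (simp_all add: matrix_vector_right_distrib matrix_vector_mult_scaleR)

lemma nest_chain:
  assumes "\<And>i. 1 \<le> i \<Longrightarrow> i \<le> m \<Longrightarrow> V i \<subseteq> V (Suc i)"
  shows "1 \<le> i \<Longrightarrow> i \<le> j \<Longrightarrow> j \<le> Suc m \<Longrightarrow> V i \<subseteq> V j"
proof (induction j)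
  case 0 then show ?case by simp
next
  case (Suc j)
  show ?case
  proof (cases "i = Suc j")
    case False
    then have "V i \<subseteq> V j" using Suc by simp
    moreover have "V j \<subseteq> V (Suc j)" using Suc False assms[of j] by simp
    ultimately show ?thesis by blast
  qed simp
qed

theorem theorem3p1:
  fixes A :: "real^'n^'n" and w :: "real^'n" and T :: real and m :: nat
    and Dop :: "(real \<Rightarrow> real) \<Rightarrow> (real \<Rightarrow> real)" and S :: "(real \<Rightarrow> real) set"
    and V :: "nat \<Rightarrow> (real^'n) set" and d :: "nat \<Rightarrow> nat"
    and ip :: "real^'n \<Rightarrow> real^'n \<Rightarrow> real" and u :: "nat \<Rightarrow> real^'n"
    and y :: "real \<Rightarrow> real^'n" and x :: "nat \<Rightarrow> real \<Rightarrow> real"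
  assumes T_pos: "T > 0"
    and m_pos: "m \<ge> 1"
    and D_op: "lin_time_op T S Dop"
    and V_sub: "\<And>i. 1 \<le> i \<Longrightarrow> i \<le> Suc m \<Longrightarrow> subspace (V i)"
    and V_nest: "\<And>i. 1 \<le> i \<Longrightarrow> i \<le> m \<Longrightarrow> V i \<subseteq> V (Suc i)"
    and d0: "d 0 = 0"
    and d_dim: "\<And>i. 1 \<le> i \<Longrightarrow> i \<le> Suc m \<Longrightarrow> d i = dim (V i)"
    and w_in: "w \<in> V 1"
    and A_V: "\<And>i. 1 \<le> i \<Longrightarrow> i \<le> m \<Longrightarrow> (\<lambda>v. A *v v) ` V i \<subseteq> V (Suc i)"
    and ip_on: "inner_product_on (V (Suc m)) ip"
    and u_orth: "\<And>j k. j \<in> {1..d (Suc m)} \<Longrightarrow> k \<in> {1..d (Suc m)} \<Longrightarrow>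
                   ip (u j) (u k) = (if j = k then 1 else 0)"
    and u_in: "\<And>i k. 1 \<le> i \<Longrightarrow> i \<le> Suc m \<Longrightarrow> k \<in> {1..d i} \<Longrightarrow> u k \<in> V i"
    and u_span: "\<And>i. 1 \<le> i \<Longrightarrow> i \<le> Suc m \<Longrightarrow> span (u ` {1..d i}) = V i"
    and y_in: "\<And>t. t \<in> {0..T} \<Longrightarrow> y t \<in> V m"
    and y_repr: "\<And>t. t \<in> {0..T} \<Longrightarrow> y t = (\<Sum>k\<in>{1..d m}. x k t *\<^sub>R u k)"
    and x_smooth: "\<And>k. k \<in> {1..d m} \<Longrightarrow> x k \<in> S"
    and galerkin: "\<And>t v. t \<in> {0..T} \<Longrightarrow> v \<in> V m \<Longrightarrow>
                     ip v (- compD Dop y t - A *v y t + w) = 0"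
  shows "\<forall>t\<in>{0..T}. - compD Dop y t - A *v y t + w =
           (\<Sum>k\<in>{d m <.. d (Suc m)}.
              (- (\<Sum>j\<in>{d (m - 1) <.. d m}. ip (u k) (A *v u j) * x j t)) *\<^sub>R u k)"
  proof
  fix t assume t: "t \<in> {0..T}"
  define N where "N = Suc m"
  define r where "r = - compD Dop y t - A *v y t + w"
  have sN: "subspace (V N)" using V_sub[of "Suc m"] unfolding N_def by simp
  have sm: "subspace (V m)" using V_sub[of m] m_pos by simp
  have nest: "V i \<subseteq> V j" if "1 \<le> i" "i \<le> j" "j \<le> Suc m" for i j
    by (rule nest_chain[of m V, OF V_nest]) (use that in auto)
  have VmN: "V m \<subseteq> V N" using V_nest[of m] m_pos unfolding N_def by simp
  have dmono: "d m \<le> d N"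
  proof -
    have "dim (V m) \<le> dim (V N)" by (rule dim_subset[OF VmN])
    then show ?thesis using d_dim[of m] d_dim[of "Suc m"] m_pos unfolding N_def by simp
  qed
  have dmono2: "d (m - 1) \<le> d m"
  proof (cases "m = 1")
    case True then show ?thesis using d0 by simp
  next
    case False
    then have "V (m - 1) \<subseteq> V m" using V_nest[of "m - 1"] m_pos by simp
    then have "dim (V (m - 1)) \<le> dim (V m)" by (rule dim_subset)
    then show ?thesis using d_dim[of m] d_dim[of "m - 1"] m_pos False by simp
  qed
  have uN: "u k \<in> V N" if "k \<in> {1..d N}" for k
    using u_in[of "Suc m" k] that unfolding N_def by simp
  have um: "u k \<in> V m" if "k \<in> {1..d m}" for k
    using u_in[of m k] that m_pos by simp
  have orthN: "\<forall>j\<in>{1..d N}. \<forall>k\<in>{1..d N}. ip (u j) (u k) = (if j = k then 1 else 0)"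
    using u_orth unfolding N_def by blast
  have ipN: "inner_product_on (V N) ip" using ip_on unfolding N_def by simp
  have zero: "ip (u k) v = 0" if k: "k \<in> {d m<..d N}" and v: "v \<in> V m" for k v
  proof -
    have kN: "k \<in> {1..d N}" using k by auto
    have sub: "{1..d m} \<subseteq> {1..d N}" using dmono by auto
    have orthm: "\<forall>j\<in>{1..d m}. \<forall>k\<in>{1..d m}. ip (u j) (u k) = (if j = k then 1 else 0)"
      using orthN sub by blast
    have umN: "\<forall>j\<in>{1..d m}. u j \<in> V N" using um VmN by blast
    have vs: "v \<in> span (u ` {1..d m})" using v u_span[of m] m_pos by simp
    have v_exp: "v = (\<Sum>j\<in>{1..d m}. ip (u j) v *\<^sub>R u j)"
      by (rule ortho_expand[OF ipN sN finite_atLeastAtMost umN orthm vs])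
    have "ip (u k) v = (\<Sum>j\<in>{1..d m}. ip (u j) v * ip (u k) (u j))"
      by (subst v_exp, rule ip_sum_right[OF ipN sN uN[OF kN] finite_atLeastAtMost umN])
    also have "\<dots> = 0"
    proof (rule sum.neutral, rule ballI)
      fix j assume j: "j \<in> {1..d m}"
      then have "j \<noteq> k" "j \<in> {1..d N}" using k sub by auto
      then have "ip (u k) (u j) = 0" using orthN kN by simp
      then show "ip (u j) v * ip (u k) (u j) = 0" by simp
    qed
    finally show ?thesis .
  qed
  have Dy: "compD Dop y t = (\<Sum>j\<in>{1..d m}. Dop (x j) t *\<^sub>R u j)"
  proof (subst vec_eq_iff, intro allI)
    fix i
    have loc: "Dop (\<lambda>s. y s $ i) t = Dop (\<lambda>s. \<Sum>j\<in>{1..d m}. u j $ i * x j s) t"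
    proof (rule lto_parts(6)[OF D_op, rule_format, OF _ t])
      fix s assume "s \<in> {0..T}"
      then show "y s $ i = (\<Sum>j\<in>{1..d m}. u j $ i * x j s)"
        using y_repr by (simp add: mult.commute)
    qed
    also have "\<dots> = (\<Sum>j\<in>{1..d m}. u j $ i * Dop (x j) t)"
      using Dop_sum[OF D_op, of "{1..d m}" x "\<lambda>j. u j $ i"] x_smooth t by auto
    finally show "compD Dop y t $ i = (\<Sum>j\<in>{1..d m}. Dop (x j) t *\<^sub>R u j) $ i"
      unfolding compD_def by (simp add: mult.commute)
  qed
  have DyVm: "compD Dop y t \<in> V m"
    unfolding Dy using sm um by (intro subspace_sum subspace_mul) auto
  have wm: "w \<in> V m" using w_in nest[of 1 m] m_pos by auto
  have Ay: "A *v y t = (\<Sum>j\<in>{1..d m}. x j t *\<^sub>R (A *v u j))"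
    using y_repr[OF t] mv_sum by simp
  have AuN: "\<And>j. j \<in> {1..d m} \<Longrightarrow> A *v u j \<in> V N"
    using A_V[of m] m_pos um N_def by blast
  have AyN: "A *v y t \<in> V N"
    unfolding Ay using sN AuN by (intro subspace_sum subspace_mul) auto
  have DyN: "compD Dop y t \<in> V N" using DyVm VmN by auto
  have wN: "w \<in> V N" using wm VmN by auto
  have rN: "r \<in> V N" unfolding r_def using sN DyN AyN wN
    by (metis subspace_add subspace_diff subspace_neg)
  have rexp: "r = (\<Sum>k\<in>{1..d N}. ip (u k) r *\<^sub>R u k)"
    using rN u_span[of N] N_def uN orthN by (intro ortho_expand[OF ipN sN]) auto
  have split: "{1..d N} = {1..d m} \<union> {d m<..d N}" using dmono by auto
  have part1: "(\<Sum>k\<in>{1..d m}. ip (u k) r *\<^sub>R u k) = 0"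
    using galerkin[OF t] um unfolding r_def by (intro sum.neutral) auto
  have coef: "ip (u k) r = - (\<Sum>j\<in>{d (m - 1)<..d m}. ip (u k) (A *v u j) * x j t)"
    if k: "k \<in> {d m<..d N}" for k
  proof -
    have ukN: "u k \<in> V N" using k uN by auto
    have e1: "r = (- compD Dop y t + - (A *v y t)) + w" unfolding r_def by simp
    have nD: "- compD Dop y t \<in> V N" using sN DyN by (rule subspace_neg)
    have nA: "- (A *v y t) \<in> V N" using sN AyN by (rule subspace_neg)
    have nDA: "- compD Dop y t + - (A *v y t) \<in> V N" using sN nD nA by (rule subspace_add)
    have i1: "ip (u k) ((- compD Dop y t + - (A *v y t)) + w) = ip (u k) (- compD Dop y t + - (A *v y t)) + ip (u k) w"
      by (rule ip_right_add[OF ipN sN ukN nDA wN])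
    have i2: "ip (u k) (- compD Dop y t + - (A *v y t)) = ip (u k) (- compD Dop y t) + ip (u k) (- (A *v y t))"
      by (rule ip_right_add[OF ipN sN ukN nD nA])
    have i3: "ip (u k) (- compD Dop y t) = - ip (u k) (compD Dop y t)"
      by (rule ip_right_neg[OF ipN sN ukN DyN])
    have i4: "ip (u k) (- (A *v y t)) = - ip (u k) (A *v y t)"
      by (rule ip_right_neg[OF ipN sN ukN AyN])
    have "ip (u k) r = (- ip (u k) (compD Dop y t) + - ip (u k) (A *v y t)) + ip (u k) w"
      by (subst e1, simp only: i1 i2 i3 i4)
    also have "\<dots> = - ip (u k) (A *v y t)" using zero[OF k DyVm] zero[OF k wm] by simp
    also have "ip (u k) (A *v y t) = (\<Sum>j\<in>{1..d m}. x j t * ip (u k) (A *v u j))"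
      unfolding Ay using ipN sN ukN AuN by (intro ip_sum_right) auto
    also have "\<dots> = (\<Sum>j\<in>{d (m - 1)<..d m}. x j t * ip (u k) (A *v u j))"
    proof -
      have sp: "{1..d m} = {1..d (m - 1)} \<union> {d (m - 1)<..d m}" using dmono2 by auto
      have z: "(\<Sum>j\<in>{1..d (m - 1)}. x j t * ip (u k) (A *v u j)) = 0"
      proof (intro sum.neutral ballI)
        fix j assume j: "j \<in> {1..d (m - 1)}"
        then have m2: "m \<ge> 2" using d0 by (cases "m = 1") auto
        have "u j \<in> V (m - 1)" using u_in[of "m - 1" j] j m2 by auto
        moreover have inc: "(\<lambda>v. A *v v) ` V (m - 1) \<subseteq> V (Suc (m - 1))"
          by (rule A_V) (use m2 in auto)
        moreover have "Suc (m - 1) = m" using m2 by simp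
        ultimately have "A *v u j \<in> V m" by (metis image_subset_iff)
        then show "x j t * ip (u k) (A *v u j) = 0" using zero[OF k] by simp
      qed
      show ?thesis unfolding sp by (subst sum.union_disjoint) (use z in auto)
    qed
    finally show ?thesis by (simp add: mult.commute)
  qed
  have "r = (\<Sum>k\<in>{d m<..d N}. ip (u k) r *\<^sub>R u k)"
    using rexp part1 unfolding split by (subst (asm) sum.union_disjoint) auto
  also have "\<dots> = (\<Sum>k\<in>{d m<..d N}. (- (\<Sum>j\<in>{d (m - 1)<..d m}. ip (u k) (A *v u j) * x j t)) *\<^sub>R u k)"
    using coef by (intro sum.cong) auto
  finally show "- compD Dop y t - A *v y t + w =
           (\<Sum>k\<in>{d m <.. d (Suc m)}.
              (- (\<Sum>j\<in>{d (m - 1) <.. d m}. ip (u k) (A *v u j) * x j t)) *\<^sub>R u k)"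
    unfolding r_def N_def .
qed

end
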